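(* Let $\mathfrak{g}$ be a finite-dimensional complex Lie algebra which is not perfect (i.e. $[\mathfrak{g},\mathfrak{g}]\neq\mathfrak{g}$) and has non-trivial center. Then $\mathfrak{g}$ admits a non-trivial CPA-product.
   Context: A CPA-structure (CPA-product) on a Lie algebra $\mathfrak{g}$ is a bilinear product $x\cdot y$ on $\mathfrak{g}$ satisfying, for all $x,y,z$: $x\cdot y=y\cdot x$; $[x,y]\cdot z=x\cdot(y\cdot z)-y\cdot(x\cdot z)$; $x\cdot[y,z]=[x\cdot y,z]+[y,x\cdot z]$. It is non-trivial if $x\cdot y\neq0$ for some $x,y$. *)

theory Defs
  imports Complex_Main
begin

definition bilinear_map :: "(complex \<Rightarrow> 'a::ab_group_add \<Rightarrow> 'a) \<Rightarrow> ('a \<Rightarrow> 'a \<Rightarrow> 'a) \<Rightarrow> bool" where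
  "bilinear_map sc m \<longleftrightarrow>
     (\<forall>x y z. m (x + y) z = m x z + m y z) \<and>
     (\<forall>x y z. m x (y + z) = m x y + m x z) \<and>
     (\<forall>c x y. m (sc c x) y = sc c (m x y)) \<and>
     (\<forall>c x y. m x (sc c y) = sc c (m x y))"

definition complex_lie_algebra :: "(complex \<Rightarrow> 'a::ab_group_add \<Rightarrow> 'a) \<Rightarrow> ('a \<Rightarrow> 'a \<Rightarrow> 'a) \<Rightarrow> bool" where
  "complex_lie_algebra sc br \<longleftrightarrow>
     vector_space sc \<and> bilinear_map sc br \<and>
     (\<forall>x. br x x = 0) \<and>
     (\<forall>x y z. br x (br y z) + br y (br z x) + br z (br x y) = 0)"

definition finite_dim :: "(complex \<Rightarrow> 'a::ab_group_add \<Rightarrow> 'a) \<Rightarrow> bool" where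
  "finite_dim sc \<longleftrightarrow> (\<exists>B. finite_dimensional_vector_space sc B)"

definition derived_algebra :: "(complex \<Rightarrow> 'a::ab_group_add \<Rightarrow> 'a) \<Rightarrow> ('a \<Rightarrow> 'a \<Rightarrow> 'a) \<Rightarrow> 'a set" where
  "derived_algebra sc br = module.span sc {br x y | x y. True}"

definition lie_center :: "('a::zero \<Rightarrow> 'a \<Rightarrow> 'a) \<Rightarrow> 'a set" where
  "lie_center br = {z. \<forall>x. br z x = 0}"

definition CPA_product :: "(complex \<Rightarrow> 'a::ab_group_add \<Rightarrow> 'a) \<Rightarrow> ('a \<Rightarrow> 'a \<Rightarrow> 'a) \<Rightarrow> ('a \<Rightarrow> 'a \<Rightarrow> 'a) \<Rightarrow> bool" where
  "CPA_product sc br p \<longleftrightarrow>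
     bilinear_map sc p \<and>
     (\<forall>x y. p x y = p y x) \<and>
     (\<forall>x y z. p (br x y) z = p x (p y z) - p y (p x z)) \<and>
     (\<forall>x y z. p x (br y z) = br (p x y) z + br y (p x z))"

end

theory Submission
  imports Defs
begin

lemma cvs: "vector_space ((*) :: complex \<Rightarrow> complex \<Rightarrow> complex)"
  by unfold_locales (auto simp: algebra_simps)

theorem proposition3p8:
  fixes sc :: "complex \<Rightarrow> 'a::ab_group_add \<Rightarrow> 'a"
    and br :: "'a \<Rightarrow> 'a \<Rightarrow> 'a"
  assumes "complex_lie_algebra sc br"
    and "finite_dim sc"
    and "derived_algebra sc br \<noteq> UNIV"
    and "lie_center br \<noteq> {0}"
  shows "\<exists>p. CPA_product sc br p \<and> (\<exists>x y. p x y \<noteq> 0)"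
proof -
  have vs: "vector_space sc" and bl: "bilinear_map sc br" and alt: "\<And>x. br x x = 0"
    using assms(1) unfolding complex_lie_algebra_def by auto
  interpret V: vector_space sc by (rule vs)
  interpret P: vector_space_pair sc "(*) :: complex \<Rightarrow> complex \<Rightarrow> complex"
    by (intro_locales) (use vs cvs in \<open>simp_all add: vector_space_def\<close>)
  have bladd1: "\<And>x y w. br (x + y) w = br x w + br y w"
    and bladd2: "\<And>x y w. br x (y + w) = br x y + br x w"
    and blsc1: "\<And>c x y. br (sc c x) y = sc c (br x y)"
    and blsc2: "\<And>c x y. br x (sc c y) = sc c (br x y)"
    using bl unfolding bilinear_map_def by auto
  have anti: "br x y = - br y x" for x y
  proof -
    have e: "br (x + y) (x + y) = (br x x + br y x) + (br x y + br y y)"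
      by (simp only: bladd1 bladd2)
    have "br x y + br y x = 0" using e alt[of x] alt[of y] alt[of "x+y"]
      by (simp add: add.commute)
    then show ?thesis by (simp add: eq_neg_iff_add_eq_0)
  qed
  have br0: "br 0 x = 0" for x
    using bladd1[of 0 0 x] by simp
  obtain z where z0: "z \<noteq> 0" and zc: "\<And>x. br z x = 0"
    using assms(4) br0 unfolding lie_center_def by auto
  have zc2: "br x z = 0" for x using anti[of x z] zc by simp
  define S where "S = derived_algebra sc br"
  obtain x0 where x0: "x0 \<notin> S" using assms(3) S_def by auto
  obtain B0 where B0: "B0 \<subseteq> S" "V.independent B0" "S \<subseteq> V.span B0"
    using V.maximal_independent_subset by blast
  have spanS: "V.span B0 \<subseteq> S"
    using B0(1) unfolding S_def derived_algebra_def
    by (metis V.span_mono V.span_span)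
  have x0B0: "x0 \<notin> B0" using x0 B0 by auto
  define B where "B = insert x0 B0"
  have indB: "V.independent B"
    unfolding B_def
  proof (rule V.independent_insertI)
    show "x0 \<notin> V.span B0" using x0 spanS by blast
  qed (rule B0(2))
  define phi where "phi = P.construct B (\<lambda>b. if b = x0 then (1::complex) else 0)"
  have lin: "Vector_Spaces.linear sc (*) phi" unfolding phi_def by (rule P.linear_construct[OF indB])
  have phix0: "phi x0 = 1" unfolding phi_def
    using P.construct_basis[OF indB, of x0] B_def by simp
  have phiB0: "phi b = 0" if "b \<in> B0" for b unfolding phi_def
    using P.construct_basis[OF indB, of b] B_def that x0B0 by auto
  have phiS: "phi v = 0" if "v \<in> S" for v
    using P.linear_eq_0_on_span[OF lin _ ] phiB0 B0(3) that by blast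
  have phibr: "phi (br x y) = 0" for x y
    by (rule phiS) (auto simp: S_def derived_algebra_def intro: V.span_base)
  have phiadd: "phi (x + y) = phi x + phi y" for x y using P.linear_add[OF lin] by simp
  have phisc: "phi (sc c x) = c * phi x" for c x using P.linear_scale[OF lin] by simp
  define p where "p x y = sc (phi x * phi y) z" for x y
  have scz: "sc c 0 = 0" for c by (rule V.scale_zero_right)
  have s1: "p (x + y) w = p x w + p y w" for x y w
    unfolding p_def phiadd by (simp add: distrib_right V.scale_left_distrib)
  have s2: "p x (y + w) = p x y + p x w" for x y w
    unfolding p_def phiadd by (simp add: distrib_left V.scale_left_distrib)
  have s3: "p (sc c x) y = sc c (p x y)" for c x y
  proof -
    have "c * phi x * phi y = c * (phi x * phi y)" by (simp only: mult.assoc)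
    then show ?thesis unfolding p_def phisc V.scale_scale by simp
  qed
  have s4: "p x (sc c y) = sc c (p x y)" for c x y
  proof -
    have "phi x * (c * phi y) = c * (phi x * phi y)" by (simp only: mult.left_commute)
    then show ?thesis unfolding p_def phisc V.scale_scale by simp
  qed
  have s5: "p x y = p y x" for x y unfolding p_def by (simp add: mult.commute)
  have s6: "p (br x y) w = p x (p y w) - p y (p x w)" for x y w
  proof -
    have "p x (p y w) = p y (p x w)"
      unfolding p_def phisc by (simp add: mult.left_commute)
    then show ?thesis by (simp add: p_def phibr)
  qed
  have s7: "p x (br y w) = br (p x y) w + br y (p x w)" for x y w
    unfolding p_def by (simp add: phibr blsc1 blsc2 zc zc2 scz)
  have "CPA_product sc br p"
    unfolding CPA_product_def bilinear_map_def using s1 s2 s3 s4 s5 s6 s7 by blast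
  moreover have "p x0 x0 \<noteq> 0" using z0 phix0 by (simp add: p_def)
  ultimately show ?thesis by blast
qed

end
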